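(* Let $k\ge 1$, $n_1,\dots,n_k\in\mathbb{N}$ and $m\in\mathbb{N}$ with $m\ge2$. For each $j$ let $I_j:\ell_2^{2n_j,\mathbb{R}}\to\ell_\infty^{N_j,\mathbb{R}}$ be an injective linear operator with $\|I_j\|\le1$ and $\|I_j^{-1}\|\le\frac{m}{m-1}$, and put $c^j_i=I_j(e_i)\in\mathbb{R}^{N_j}$ for $1\le i\le 2n_j$, with coordinates $c^j_i(s)$. Let $\rho=(\rho_{i_1,\dots,i_k})\in\mathbb{C}^{n_1}\otimes\cdots\otimes\mathbb{C}^{n_k}$. Consider as variables a complex array $\lambda=(\lambda_{i_1,\dots,i_k})$, $1\le i_j\le n_j$ (equivalently, the $2n_1\cdots n_k$ real numbers $\operatorname{Re}\lambda_{i_1,\dots,i_k},\operatorname{Im}\lambda_{i_1,\dots,i_k}$), and define the real array $\tilde\lambda_{i_1,\dots,i_k}$, $1\le i_j\le 2n_j$, as follows: for $j\le k$ let $i'_j=i_j$ if $i_j\le n_j$ and $i'_j=i_j-n_j$ if $i_j>n_j$; let $t$ be the number of $j\in\{1,\dots,k-1\}$ with $i_j>n_j$; then $\tilde\lambda_{i_1,\dots,i_k}=\operatorname{Re}(\mathrm{i}^{t}\lambda_{i'_1,\dots,i'_k})$ if $i_k\le n_k$ and $\tilde\lambda_{i_1,\dots,i_k}=\operatorname{Im}(\mathrm{i}^{t}\lambda_{i'_1,\dots,i'_k})$ if $i_k>n_k$ (here $\mathrm{i}=\sqrt{-1}$). Let $V$ be the optimal value of the linear programming problem: maximize $$\sum_{i_1,\dots,i_k=1}^{n_1,\dots,n_k}\operatorname{Re}(\rho_{i_1,\dots,i_k})\tilde\lambda_{i_1,\dots,i_k}-\sum_{i_1,\dots,i_{k-1}=1}^{n_1,\dots,n_{k-1}}\sum_{i_k=n_k+1}^{2n_k}\operatorname{Im}(\rho_{i_1,\dots,i_{k-1},i_k-n_k})\tilde\lambda_{i_1,\dots,i_k}$$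 subject to $$-1\le\sum_{i_1,\dots,i_k=1}^{2n_1,\dots,2n_k}\tilde\lambda_{i_1,\dots,i_k}\,c^1_{i_1}(s_1)\cdots c^k_{i_k}(s_k)\le1\quad\text{for all }1\le s_j\le N_j,\ 1\le j\le k.$$ Then $\pi(\rho)\le V\le\left(\frac{m}{m-1}\right)^k\pi(\rho)$, where $\pi(\rho)$ is the norm of $\rho$ in $\bigotimes_{j=1,\pi}^k\ell_2^{n_j,\mathbb{C}}$; i.e. $V$ equals this norm up to a relative error bounded by $\left(\frac{m}{m-1}\right)^k-1$.
   Context: $\ell_2^{n,\mathbb{C}}$ is $\mathbb{C}^n$ with the Euclidean norm, $\ell_2^{n,\mathbb{R}}$ is $\mathbb{R}^n$ with the Euclidean norm, $\ell_\infty^{N,\mathbb{R}}$ is $\mathbb{R}^N$ with the sup-norm, and $e_1,e_2,\dots$ is the canonical basis. For injective $I$, $\|I^{-1}\|$ is the norm of the inverse on the range of $I$. Tensors in $\mathbb{C}^{n_1}\otimes\cdots\otimes\mathbb{C}^{n_k}$ are identified with coefficient arrays with respect to $e_{i_1}\otimes\cdots\otimes e_{i_k}$. The projective norm on $\bigotimes_{j=1}^kX_j$ is $\pi(u)=\inf\{\sum_{i=1}^r\|u^1_i\|\cdots\|u^k_i\|: u=\sum_{i=1}^r u^1_i\otimes\cdots\otimes u^k_i\}$; $\bigotimes_{j=1,\pi}^kX_j$ denotes the tensor product with this norm. The array $\tilde\lambda$ is the coefficient array of the real $(k-1)$-linear map $\mathbb{R}^{2n_1}\times\cdots\times\mathbb{R}^{2n_{k-1}}\to\mathbb{R}^{2n_k}$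 obtained from the complex $(k-1)$-linear map associated with $\lambda$ by identifying $\mathbb{C}^{n}$ with $\mathbb{R}^{2n}$ via $z\mapsto(\operatorname{Re}z,\operatorname{Im}z)$. *)

theory Defs
  imports Complex_Main "HOL-Library.FuncSet"
begin

text \<open>Conventions: all indices are 0-based. Tensor indices are functions
  nat \<Rightarrow> nat in an extensional product (PiE) over the slots 0..k-1.
  Vectors of R^d / C^d are functions nat \<Rightarrow> _ of which only the values at
  0..d-1 matter.\<close>

definition l2r :: "nat \<Rightarrow> (nat \<Rightarrow> real) \<Rightarrow> real" where
  "l2r d x = sqrt (\<Sum>i<d. (x i)\<^sup>2)"

definition l2c :: "nat \<Rightarrow> (nat \<Rightarrow> complex) \<Rightarrow> real" where
  "l2c d x = sqrt (\<Sum>i<d. (cmod (x i))\<^sup>2)"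

definition linf :: "nat \<Rightarrow> (nat \<Rightarrow> real) \<Rightarrow> real" where
  "linf N v = Max (insert 0 ((\<lambda>s. \<bar>v s\<bar>) ` {..<N}))"

text \<open>The linear map R^d \<rightarrow> R^N whose columns are c 0, ..., c (d-1):
  c i = I(e_i), with coordinates c i s.\<close>
definition colmap :: "nat \<Rightarrow> (nat \<Rightarrow> nat \<Rightarrow> real) \<Rightarrow> (nat \<Rightarrow> real) \<Rightarrow> nat \<Rightarrow> real" where
  "colmap d c x = (\<lambda>s. \<Sum>i<d. x i * c i s)"

definition opnorm :: "nat \<Rightarrow> nat \<Rightarrow> (nat \<Rightarrow> nat \<Rightarrow> real) \<Rightarrow> real" where
  "opnorm d N c = Sup ((\<lambda>x. linf N (colmap d c x)) ` {x. l2r d x \<le> 1})"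

text \<open>Norm of the inverse on the range of an injective I.\<close>
definition invnorm :: "nat \<Rightarrow> nat \<Rightarrow> (nat \<Rightarrow> nat \<Rightarrow> real) \<Rightarrow> real" where
  "invnorm d N c = Sup ((\<lambda>x. l2r d x) ` {x. linf N (colmap d c x) \<le> 1})"

definition injective_map :: "nat \<Rightarrow> nat \<Rightarrow> (nat \<Rightarrow> nat \<Rightarrow> real) \<Rightarrow> bool" where
  "injective_map d N c \<longleftrightarrow>
     (\<forall>x y. (\<forall>s<N. colmap d c x s = colmap d c y s) \<longrightarrow> (\<forall>i<d. x i = y i))"

definition idx :: "nat \<Rightarrow> (nat \<Rightarrow> nat) \<Rightarrow> (nat \<Rightarrow> nat) set" where
  "idx k n = PiE {..<k} (\<lambda>j. {..<n j})"

text \<open>Projective tensor norm of rho in C^{n_1} \<otimes> ... \<otimes> C^{n_k}: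
  infimum of \<Sum>_r \<Prod>_j |u_r^j| over all representations
  rho = \<Sum>_{r<R} u_r^1 \<otimes> ... \<otimes> u_r^k (u r j is the j-th factor of term r).\<close>
definition proj_norm :: "nat \<Rightarrow> (nat \<Rightarrow> nat) \<Rightarrow> ((nat \<Rightarrow> nat) \<Rightarrow> complex) \<Rightarrow> real" where
  "proj_norm k n \<rho> = Inf {(\<Sum>r<R. \<Prod>j<k. l2c (n j) (u r j)) | (R::nat) (u::nat \<Rightarrow> nat \<Rightarrow> nat \<Rightarrow> complex).
      \<forall>i\<in>idx k n. \<rho> i = (\<Sum>r<R. \<Prod>j<k. u r j (i j))}"

definition lam_tilde :: "nat \<Rightarrow> (nat \<Rightarrow> nat) \<Rightarrow> ((nat \<Rightarrow> nat) \<Rightarrow> complex) \<Rightarrow> (nat \<Rightarrow> nat) \<Rightarrow> real" where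
  "lam_tilde k n lam i =
     (let i' = restrict (\<lambda>j. if i j < n j then i j else i j - n j) {..<k};
          t = card {j. j < k - 1 \<and> n j \<le> i j};
          z = \<i> ^ t * lam i'
      in if i (k - 1) < n (k - 1) then Re z else Im z)"

definition lp_objective :: "nat \<Rightarrow> (nat \<Rightarrow> nat) \<Rightarrow> ((nat \<Rightarrow> nat) \<Rightarrow> complex) \<Rightarrow> ((nat \<Rightarrow> nat) \<Rightarrow> complex) \<Rightarrow> real" where
  "lp_objective k n \<rho> lam =
     (\<Sum>i\<in>idx k n. Re (\<rho> i) * lam_tilde k n lam i)
   - (\<Sum>i\<in>PiE {..<k} (\<lambda>j. if j = k - 1 then {n j..<2 * n j} else {..<n j}).
        Im (\<rho> (restrict (\<lambda>j. if j = k - 1 then i j - n j else i j) {..<k}))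
        * lam_tilde k n lam i)"

text \<open>Feasibility: c j i s is the s-th coordinate of c^j_i = I_j(e_i).\<close>
definition lp_feasible :: "nat \<Rightarrow> (nat \<Rightarrow> nat) \<Rightarrow> (nat \<Rightarrow> nat) \<Rightarrow> (nat \<Rightarrow> nat \<Rightarrow> nat \<Rightarrow> real)
    \<Rightarrow> ((nat \<Rightarrow> nat) \<Rightarrow> complex) \<Rightarrow> bool" where
  "lp_feasible k n N c lam \<longleftrightarrow>
     (\<forall>s\<in>idx k N.
        \<bar>\<Sum>i\<in>idx k (\<lambda>j. 2 * n j). lam_tilde k n lam i * (\<Prod>j<k. c j (i j) (s j))\<bar> \<le> 1)"

definition lp_value :: "nat \<Rightarrow> (nat \<Rightarrow> nat) \<Rightarrow> (nat \<Rightarrow> nat) \<Rightarrow> (nat \<Rightarrow> nat \<Rightarrow> nat \<Rightarrow> real)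
    \<Rightarrow> ((nat \<Rightarrow> nat) \<Rightarrow> complex) \<Rightarrow> real" where
  "lp_value k n N c \<rho> = Sup (lp_objective k n \<rho> ` {lam. lp_feasible k n N c lam})"

end

theory Submission imports Defs "HOL-Analysis.Analysis" begin


lemma linf_nonneg: "0 \<le> linf N v"
  unfolding linf_def by (simp add: Max_ge_iff)

lemma linf_ge: "s < N \<Longrightarrow> \<bar>v s\<bar> \<le> linf N v"
  unfolding linf_def by (simp add: Max_ge_iff)

lemma linf_le: "0 \<le> B \<Longrightarrow> (\<And>s. s < N \<Longrightarrow> \<bar>v s\<bar> \<le> B) \<Longrightarrow> linf N v \<le> B"
  unfolding linf_def by (auto simp add: Max_le_iff)

lemma l2r_L2: "l2r d x = L2_set x {..<d}"
  unfolding l2r_def L2_set_def by simp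

lemma l2r_nonneg: "0 \<le> l2r d x"
  unfolding l2r_def by (simp add: sum_nonneg)

lemma l2r_sq: "(l2r d x)\<^sup>2 = (\<Sum>i<d. (x i)\<^sup>2)"
  unfolding l2r_def by (simp add: sum_nonneg)

lemma l2r_scale: "0 \<le> r \<Longrightarrow> l2r d (\<lambda>i. r * x i) = r * l2r d x"
  unfolding l2r_L2 using L2_set_right_distrib by metis

lemma l2r_cong: "(\<And>i. i < d \<Longrightarrow> x i = y i) \<Longrightarrow> l2r d x = l2r d y"
  unfolding l2r_def by simp

lemma comp_le_l2r: "i < d \<Longrightarrow> \<bar>x i\<bar> \<le> l2r d x"
proof -
  assume "i < d"
  have "(x i)\<^sup>2 \<le> (\<Sum>i<d. (x i)\<^sup>2)"
    by (rule member_le_sum[where f="\<lambda>i. (x i)\<^sup>2"]) (use \<open>i<d\<close> in auto)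
  then have "sqrt ((x i)\<^sup>2) \<le> l2r d x" unfolding l2r_def using real_sqrt_le_mono by blast
  then show ?thesis by simp
qed

lemma opnorm_bdd: "bdd_above ((\<lambda>x. linf N (colmap d c x)) ` {x. l2r d x \<le> 1})"
proof (rule bdd_aboveI2)
  fix x assume "x \<in> {x. l2r d x \<le> 1}"
  then have x1: "\<And>i. i < d \<Longrightarrow> \<bar>x i\<bar> \<le> 1" using comp_le_l2r by (metis mem_Collect_eq order_trans)
  show "linf N (colmap d c x) \<le> (\<Sum>s<N. \<Sum>i<d. \<bar>c i s\<bar>)"
  proof (rule linf_le)
    show "0 \<le> (\<Sum>s<N. \<Sum>i<d. \<bar>c i s\<bar>)" by (simp add: sum_nonneg)
    fix s assume "s < N"
    have "\<bar>colmap d c x s\<bar> \<le> (\<Sum>i<d. \<bar>x i * c i s\<bar>)" unfolding colmap_def by (rule sum_abs)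
    also have "\<dots> \<le> (\<Sum>i<d. \<bar>c i s\<bar>)"
    proof (rule sum_mono)
      fix i assume "i \<in> {..<d}"
      then show "\<bar>x i * c i s\<bar> \<le> \<bar>c i s\<bar>" using x1[of i]
        by (simp add: abs_mult mult_left_le_one_le)
    qed
    also have "\<dots> \<le> (\<Sum>s<N. \<Sum>i<d. \<bar>c i s\<bar>)"
      by (rule member_le_sum[where f="\<lambda>s. \<Sum>i<d. \<bar>c i s\<bar>"]) (use \<open>s<N\<close> in \<open>auto simp: sum_nonneg\<close>)
    finally show "\<bar>colmap d c x s\<bar> \<le> (\<Sum>s<N. \<Sum>i<d. \<bar>c i s\<bar>)" .
  qed
qed

lemma row_bound:
  assumes "opnorm d N c \<le> 1" "s < N"
  shows "l2r d (\<lambda>i. c i s) \<le> 1"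
proof (cases "l2r d (\<lambda>i. c i s) = 0")
  case True then show ?thesis by simp
next
  case False
  define r where "r = l2r d (\<lambda>i. c i s)"
  have rpos: "r > 0" using False l2r_nonneg r_def by (metis less_eq_real_def)
  define x where "x = (\<lambda>i. (1/r) * c i s)"
  have "l2r d x = (1/r) * r" unfolding x_def r_def by (rule l2r_scale) (simp add: l2r_nonneg)
  then have "l2r d x = 1" using rpos by simp
  then have xin: "x \<in> {x. l2r d x \<le> 1}" by simp
  have "colmap d c x s = (1/r) * (\<Sum>i<d. (c i s)\<^sup>2)"
    unfolding colmap_def x_def by (simp add: sum_distrib_left power2_eq_square mult.assoc)
  also have "\<dots> = r" using rpos by (simp add: r_def flip: l2r_sq) (simp add: power2_eq_square)
  finally have "r \<le> linf N (colmap d c x)" using linf_ge[OF assms(2), of "colmap d c x"] by simp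
  also have "\<dots> \<le> opnorm d N c" unfolding opnorm_def
    by (rule cSup_upper) (use xin opnorm_bdd in auto)
  finally show ?thesis using assms(1) r_def by simp
qed



lemma colmap_cong: "(\<And>i. i < d \<Longrightarrow> x i = y i) \<Longrightarrow> colmap d c x = colmap d c y"
  unfolding colmap_def by simp

lemma inj_bb:
  assumes inj: "injective_map d N c"
  shows "\<exists>C\<ge>0. \<forall>x. l2r d x \<le> C * linf N (colmap d c x)"
proof (cases "d = 0")
  case True
  then show ?thesis by (intro exI[of _ 0]) (simp add: l2r_def)
next
  case False
  define P where "P = (PiE UNIV (\<lambda>i. if i < d then {-1..1::real} else {0}))"
  have "compactin (product_topology (\<lambda>i. euclidean) UNIV) P"
    unfolding P_def by (subst compactin_PiE) auto
  then have cP: "compact P" by (simp add: euclidean_product_topology)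
  have coord: "\<And>i. continuous_on UNIV (\<lambda>x::nat\<Rightarrow>real. x i)" by simp
  have "closed {x::nat\<Rightarrow>real. (\<Sum>i<d. (x i)\<^sup>2) = 1}"
    by (rule closed_Collect_eq) (intro continuous_intros coord)+
  then have cS: "compact (P \<inter> {x. (\<Sum>i<d. (x i)\<^sup>2) = 1})" using cP by blast
  define S where "S = P \<inter> {x. (\<Sum>i<d. (x i)\<^sup>2) = 1}"
  define g where "g = (\<lambda>x. \<Sum>s<N. (colmap d c x s)\<^sup>2)"
  have "(\<Sum>i<d. ((\<lambda>i. if i = 0 then 1 else 0::real) i)\<^sup>2) = (\<Sum>i<d. if i = 0 then 1 else 0)"
    by (rule sum.cong) auto
  then have e0: "(\<lambda>i. if i = 0 then 1 else 0) \<in> S" unfolding S_def P_def using False by auto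
  have "continuous_on UNIV g" unfolding g_def colmap_def
    by (intro continuous_intros coord)+
  then have "continuous_on S g" by (rule continuous_on_subset) simp
  then obtain x0 where x0: "x0 \<in> S" and x0min: "\<And>y. y \<in> S \<Longrightarrow> g x0 \<le> g y"
    using continuous_attains_inf[of S g] cS e0 unfolding S_def by blast
  have gpos: "g x0 > 0"
  proof (rule ccontr)
    assume "\<not> g x0 > 0"
    then have "g x0 = 0" proof -
      have "g x0 \<ge> 0" unfolding g_def by (simp add: sum_nonneg)
      then show ?thesis using \<open>\<not> g x0 > 0\<close> by linarith
    qed
    then have "\<forall>s<N. colmap d c x0 s = colmap d c (\<lambda>_. 0) s"
      unfolding g_def by (subst (asm) sum_nonneg_eq_0_iff) (auto simp: colmap_def)
    then have "\<forall>i<d. x0 i = 0" using inj unfolding injective_map_def by blast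
    then have "(\<Sum>i<d. (x0 i)\<^sup>2) = 0" by simp
    then show False using x0 unfolding S_def by simp
  qed
  define C where "C = sqrt (real N / g x0)"
  show ?thesis
  proof (intro exI[of _ C] conjI allI)
    show "0 \<le> C" unfolding C_def using gpos by simp
    fix x
    show "l2r d x \<le> C * linf N (colmap d c x)"
    proof (cases "l2r d x = 0")
      case True then show ?thesis using \<open>0 \<le> C\<close> linf_nonneg by simp
    next
      case False
      define r where "r = l2r d x"
      have rpos: "r > 0" using False l2r_nonneg r_def by (metis less_eq_real_def)
      define x' where "x' = (\<lambda>i. if i < d then x i / r else 0)"
      have cm: "colmap d c x' s = colmap d c x s / r" for s
        unfolding colmap_def x'_def by (simp add: sum_divide_distrib)
      have sq: "(\<Sum>i<d. (x' i)\<^sup>2) = 1"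
      proof -
        have "(\<Sum>i<d. (x' i)\<^sup>2) = (\<Sum>i<d. (x i)\<^sup>2) / r\<^sup>2"
          unfolding x'_def by (simp add: sum_divide_distrib power_divide)
        also have "\<dots> = 1" using rpos by (simp add: r_def flip: l2r_sq)
        finally show ?thesis .
      qed
      have "x' \<in> P" unfolding P_def
      proof (auto simp: PiE_iff)
        fix i assume "i < d"
        have "\<bar>x i\<bar> \<le> r" using comp_le_l2r[OF \<open>i<d\<close>] r_def by simp
        then show "-1 \<le> x' i" "x' i \<le> 1" using rpos \<open>i<d\<close> unfolding x'_def
          by (auto simp: abs_le_iff field_simps)
      next
        fix i assume "\<not> i < d" then show "x' i = 0" unfolding x'_def by simp
      qed
      then have "x' \<in> S" using sq unfolding S_def by simp
      then have "g x0 \<le> g x'" by (rule x0min)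
      also have "g x' = g x / r\<^sup>2" unfolding g_def cm by (simp add: power_divide sum_divide_distrib)
      also have "g x \<le> real N * (linf N (colmap d c x))\<^sup>2"
      proof -
        have "g x \<le> (\<Sum>s<N. (linf N (colmap d c x))\<^sup>2)" unfolding g_def
        proof (rule sum_mono)
          fix s assume "s \<in> {..<N}"
          then have "\<bar>colmap d c x s\<bar> \<le> linf N (colmap d c x)" by (simp add: linf_ge)
          then show "(colmap d c x s)\<^sup>2 \<le> (linf N (colmap d c x))\<^sup>2"
            by (metis abs_le_square_iff abs_of_nonneg linf_nonneg)
        qed
        then show ?thesis by simp
      qed
      finally have "g x0 \<le> real N * (linf N (colmap d c x))\<^sup>2 / r\<^sup>2" using rpos by (simp add: divide_right_mono)
      then have "r\<^sup>2 \<le> (real N / g x0) * (linf N (colmap d c x))\<^sup>2" using rpos gpos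
        by (simp add: field_simps)
      then have "sqrt (r\<^sup>2) \<le> sqrt ((real N / g x0) * (linf N (colmap d c x))\<^sup>2)"
        using real_sqrt_le_mono by blast
      moreover have "sqrt ((real N / g x0) * (linf N (colmap d c x))\<^sup>2) = C * linf N (colmap d c x)"
        unfolding C_def real_sqrt_mult using linf_nonneg[of N "colmap d c x"] by simp
      ultimately show ?thesis using rpos by (simp add: r_def)
    qed
  qed
qed

lemma inv_bound:
  assumes inj: "injective_map d N c" and iv: "invnorm d N c \<le> K"
  shows "l2r d a \<le> K * linf N (colmap d c a)"
proof -
  obtain C where C: "C \<ge> 0" "\<And>x. l2r d x \<le> C * linf N (colmap d c x)" using inj_bb[OF inj] by blast
  have bdd: "bdd_above ((\<lambda>x. l2r d x) ` {x. linf N (colmap d c x) \<le> 1})"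
  proof (rule bdd_aboveI2)
    fix x assume "x \<in> {x. linf N (colmap d c x) \<le> 1}"
    then have "C * linf N (colmap d c x) \<le> C" using C(1) by (simp add: mult_left_le)
    then show "l2r d x \<le> C" using C(2)[of x] by simp
  qed
  define L where "L = linf N (colmap d c a)"
  show ?thesis
  proof (cases "L = 0")
    case True
    then have "l2r d a \<le> 0" using C(2)[of a] L_def by simp
    then show ?thesis using True L_def l2r_nonneg[of d a] by simp
  next
    case False
    then have Lpos: "L > 0" using linf_nonneg L_def by (metis less_eq_real_def)
    define x where "x = (\<lambda>i. (1/L) * a i)"
    have cm: "colmap d c x = (\<lambda>s. colmap d c a s / L)"
      unfolding colmap_def x_def by (simp add: sum_divide_distrib)
    have "linf N (colmap d c x) \<le> 1" unfolding cm
    proof (rule linf_le)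
      fix s assume "s < N"
      then have "\<bar>colmap d c a s\<bar> \<le> L" using linf_ge L_def by simp
      then show "\<bar>colmap d c a s / L\<bar> \<le> 1" using Lpos by simp
    qed simp
    then have "l2r d x \<le> invnorm d N c" unfolding invnorm_def
      by (intro cSup_upper bdd) simp
    also have "l2r d x = (1/L) * l2r d a" unfolding x_def by (rule l2r_scale) (use Lpos in simp)
    finally have "(1/L) * l2r d a \<le> K" using iv by simp
    then show ?thesis using Lpos by (simp add: L_def field_simps)
  qed
qed



definition isrep :: "nat \<Rightarrow> (nat \<Rightarrow> nat) \<Rightarrow> ((nat \<Rightarrow> nat) \<Rightarrow> complex) \<Rightarrow> nat \<Rightarrow> (nat \<Rightarrow> nat \<Rightarrow> nat \<Rightarrow> complex) \<Rightarrow> bool" where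
  "isrep k n \<sigma> R u \<longleftrightarrow> (\<forall>i\<in>idx k n. \<sigma> i = (\<Sum>r<R. \<Prod>j<k. u r j (i j)))"

definition cost :: "nat \<Rightarrow> (nat \<Rightarrow> nat) \<Rightarrow> nat \<Rightarrow> (nat \<Rightarrow> nat \<Rightarrow> nat \<Rightarrow> complex) \<Rightarrow> real" where
  "cost k n R u = (\<Sum>r<R. \<Prod>j<k. l2c (n j) (u r j))"

lemma pn_def2: "proj_norm k n \<sigma> = Inf {cost k n R u | R u. isrep k n \<sigma> R u}"
  unfolding proj_norm_def cost_def isrep_def by simp

lemma l2c_nonneg: "0 \<le> l2c d v" unfolding l2c_def by (simp add: sum_nonneg)

lemma cost_nonneg: "0 \<le> cost k n R u"
  unfolding cost_def by (simp add: sum_nonneg prod_nonneg l2c_nonneg)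

lemma finite_idx: "finite (idx k n)" unfolding idx_def by (simp add: finite_PiE)

lemma pn_le: "isrep k n \<sigma> R u \<Longrightarrow> proj_norm k n \<sigma> \<le> cost k n R u"
  unfolding pn_def2 by (rule cInf_lower) (auto intro!: bdd_belowI[of _ 0] cost_nonneg)

lemma rep_exists:
  assumes "k \<ge> 1" shows "\<exists>R u. isrep k n \<sigma> R u"
proof -
  define A where "A = idx k n"
  have fA: "finite A" unfolding A_def by (rule finite_idx)
  obtain h where h: "bij_betw h {0..<card A} A" using ex_bij_betw_nat_finite[OF fA] by blast
  define u where "u = (\<lambda>r j p. if p = h r j then (if j = 0 then \<sigma> (h r) else 1) else (0::complex))"
  have "isrep k n \<sigma> (card A) u" unfolding isrep_def
  proof
    fix i assume iA: "i \<in> idx k n"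
    have pr: "(\<Prod>j<k. u r j (i j)) = (if i = h r then \<sigma> (h r) else 0)" if r: "r < card A" for r
    proof (cases "i = h r")
      case True
      have "(\<Prod>j<k. u r j (i j)) = u r 0 (i 0) * (\<Prod>j\<in>{..<k}-{0}. u r j (i j))"
        using assms by (subst prod.remove[of _ 0]) auto
      also have "(\<Prod>j\<in>{..<k}-{0}. u r j (i j)) = 1" using True by (intro prod.neutral) (auto simp: u_def)
      finally show ?thesis using True by (simp add: u_def)
    next
      case False
      have hr: "h r \<in> A" using h r by (auto simp: bij_betw_def)
      then obtain j where "j < k" "i j \<noteq> h r j" using False iA unfolding A_def idx_def
        by (metis PiE_ext lessThan_iff)
      then have "(\<Prod>j<k. u r j (i j)) = 0" by (intro prod_zero) (auto simp: u_def intro!: bexI[of _ j])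
      then show ?thesis using False by simp
    qed
    have "(\<Sum>r<card A. \<Prod>j<k. u r j (i j)) = (\<Sum>r\<in>{0..<card A}. (\<lambda>a. if i = a then \<sigma> a else 0) (h r))"
      by (rule sum.cong) (auto simp: pr)
    also have "\<dots> = (\<Sum>a\<in>A. if i = a then \<sigma> a else 0)" by (rule sum.reindex_bij_betw[OF h])
    also have "\<dots> = \<sigma> i" using iA fA unfolding A_def by simp
    finally show "\<sigma> i = (\<Sum>r<card A. \<Prod>j<k. u r j (i j))" by simp
  qed
  then show ?thesis by blast
qed

lemma pn_ge:
  assumes "k \<ge> 1" "\<And>R u. isrep k n \<sigma> R u \<Longrightarrow> B \<le> cost k n R u"
  shows "B \<le> proj_norm k n \<sigma>"
  unfolding pn_def2 by (rule cInf_greatest) (use rep_exists[OF assms(1)] assms(2) in auto)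

lemma pn_nonneg: "k \<ge> 1 \<Longrightarrow> 0 \<le> proj_norm k n \<sigma>"
  by (rule pn_ge) (auto simp: cost_nonneg)

lemma pn_cong: "(\<And>i. i \<in> idx k n \<Longrightarrow> \<sigma> i = \<tau> i) \<Longrightarrow> proj_norm k n \<sigma> = proj_norm k n \<tau>"
  unfolding pn_def2 isrep_def by simp

lemma pn_zero: "proj_norm k n (\<lambda>_. 0) \<le> 0"
proof -
  have "isrep k n (\<lambda>_. 0) 0 u" for u unfolding isrep_def by simp
  then show ?thesis using pn_le[of k n "\<lambda>_. 0" 0] by (simp add: cost_def)
qed

lemma l2c_scale: "l2c d (\<lambda>p. z * v p) = cmod z * l2c d v"
proof -
  have "l2c d (\<lambda>p. z * v p) = sqrt ((cmod z)\<^sup>2 * (\<Sum>p<d. (cmod (v p))\<^sup>2))"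
    unfolding l2c_def by (simp add: norm_mult power_mult_distrib sum_distrib_left)
  then show ?thesis unfolding l2c_def by (simp add: real_sqrt_mult)
qed

lemma pn_elem: "proj_norm k n (\<lambda>i. \<Prod>j<k. v j (i j)) \<le> (\<Prod>j<k. l2c (n j) (v j))"
proof -
  have "isrep k n (\<lambda>i. \<Prod>j<k. v j (i j)) 1 (\<lambda>r. v)" unfolding isrep_def by simp
  from pn_le[OF this] show ?thesis by (simp add: cost_def)
qed

lemma pn_scale:
  assumes k: "k \<ge> 1"
  shows "proj_norm k n (\<lambda>i. z * \<sigma> i) \<le> cmod z * proj_norm k n \<sigma>"
proof (cases "z = 0")
  case True
  then show ?thesis using pn_zero[of k n] by simp
next
  case False
  have "proj_norm k n (\<lambda>i. z * \<sigma> i) / cmod z \<le> proj_norm k n \<sigma>"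
  proof (rule pn_ge[OF k])
    fix R u assume rep: "isrep k n \<sigma> R u"
    define u' where "u' = (\<lambda>r j. if j = 0 then (\<lambda>p. z * u r 0 p) else u r j)"
    have pr: "(\<Prod>j<k. u' r j (i j)) = z * (\<Prod>j<k. u r j (i j))" for r i
    proof -
      have "(\<Prod>j<k. u' r j (i j)) = u' r 0 (i 0) * (\<Prod>j\<in>{..<k}-{0}. u' r j (i j))"
        using k by (subst prod.remove[of _ 0]) auto
      also have "(\<Prod>j\<in>{..<k}-{0}. u' r j (i j)) = (\<Prod>j\<in>{..<k}-{0}. u r j (i j))"
        by (rule prod.cong) (auto simp: u'_def)
      also have "(\<Prod>j<k. u r j (i j)) = u r 0 (i 0) * (\<Prod>j\<in>{..<k}-{0}. u r j (i j))"
        using k by (subst prod.remove[of _ 0]) auto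
      ultimately show ?thesis by (simp add: u'_def)
    qed
    have pc: "(\<Prod>j<k. l2c (n j) (u' r j)) = cmod z * (\<Prod>j<k. l2c (n j) (u r j))" for r
    proof -
      have "(\<Prod>j<k. l2c (n j) (u' r j)) = l2c (n 0) (u' r 0) * (\<Prod>j\<in>{..<k}-{0}. l2c (n j) (u' r j))"
        using k by (subst prod.remove[of _ 0]) auto
      also have "(\<Prod>j\<in>{..<k}-{0}. l2c (n j) (u' r j)) = (\<Prod>j\<in>{..<k}-{0}. l2c (n j) (u r j))"
        by (rule prod.cong) (auto simp: u'_def)
      also have "(\<Prod>j<k. l2c (n j) (u r j)) = l2c (n 0) (u r 0) * (\<Prod>j\<in>{..<k}-{0}. l2c (n j) (u r j))"
        using k by (subst prod.remove[of _ 0]) auto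
      ultimately show ?thesis by (simp add: u'_def l2c_scale)
    qed
    have "isrep k n (\<lambda>i. z * \<sigma> i) R u'" using rep unfolding isrep_def
      by (simp add: pr sum_distrib_left)
    then have "proj_norm k n (\<lambda>i. z * \<sigma> i) \<le> cost k n R u'" by (rule pn_le)
    also have "\<dots> = cmod z * cost k n R u" unfolding cost_def pc by (simp add: sum_distrib_left)
    finally show "proj_norm k n (\<lambda>i. z * \<sigma> i) / cmod z \<le> cost k n R u"
      using False by (simp add: field_simps)
  qed
  then show ?thesis using False by (simp add: field_simps)
qed

lemma pn_add:
  assumes k: "k \<ge> 1"
  shows "proj_norm k n (\<lambda>i. \<sigma> i + \<tau> i) \<le> proj_norm k n \<sigma> + proj_norm k n \<tau>"
proof -
  have main: "proj_norm k n (\<lambda>i. \<sigma> i + \<tau> i) \<le> cost k n R1 u1 + cost k n R2 u2"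
    if r1: "isrep k n \<sigma> R1 u1" and r2: "isrep k n \<tau> R2 u2" for R1 u1 R2 u2
  proof -
    define u where "u = (\<lambda>r. if r < R1 then u1 r else u2 (r - R1))"
    have split: "(\<Sum>r<R1+R2. f r) = (\<Sum>r<R1. f r) + (\<Sum>r<R2. f (r + R1))" for f :: "nat \<Rightarrow> 'a::comm_monoid_add"
      by (induct R2) (auto simp: ac_simps)
    have "isrep k n (\<lambda>i. \<sigma> i + \<tau> i) (R1+R2) u" using r1 r2 unfolding isrep_def
      by (simp add: split u_def)
    then have "proj_norm k n (\<lambda>i. \<sigma> i + \<tau> i) \<le> cost k n (R1+R2) u" by (rule pn_le)
    also have "\<dots> = cost k n R1 u1 + cost k n R2 u2" unfolding cost_def split by (simp add: u_def)
    finally show ?thesis .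
  qed
  have "proj_norm k n (\<lambda>i. \<sigma> i + \<tau> i) - proj_norm k n \<tau> \<le> proj_norm k n \<sigma>"
  proof (rule pn_ge[OF k])
    fix R1 u1 assume r1: "isrep k n \<sigma> R1 u1"
    have "proj_norm k n (\<lambda>i. \<sigma> i + \<tau> i) - cost k n R1 u1 \<le> proj_norm k n \<tau>"
    proof (rule pn_ge[OF k])
      fix R u assume "isrep k n \<tau> R u"
      from main[OF r1 this] show "proj_norm k n (\<lambda>i. \<sigma> i + \<tau> i) - cost k n R1 u1 \<le> cost k n R u" by simp
    qed
    then show "proj_norm k n (\<lambda>i. \<sigma> i + \<tau> i) - proj_norm k n \<tau> \<le> cost k n R1 u1" by simp
  qed
  then show ?thesis by simp
qed



definition vv :: "('i \<Rightarrow> complex) \<Rightarrow> ('i \<Rightarrow> complex) list \<Rightarrow> real \<Rightarrow> (nat \<Rightarrow> real) \<Rightarrow> 'i \<Rightarrow> complex" where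
  "vv x0 gs t a = (\<lambda>i. of_real t * x0 i + (\<Sum>j<length gs. of_real (a j) * (gs!j) i))"

lemma vv_snoc: "vv x0 (gs @ [g]) t a i = vv x0 gs t a i + of_real (a (length gs)) * g i"
  unfolding vv_def by (simp add: nth_append)

lemma vv_add: "vv x0 gs (t + t') (\<lambda>j. a j + a' j) i = vv x0 gs t a i + vv x0 gs t' a' i"
  unfolding vv_def by (simp add: algebra_simps sum.distrib)

lemma vv_scale: "vv x0 gs (c * t) (\<lambda>j. c * a j) i = of_real c * vv x0 gs t a i"
  unfolding vv_def by (simp add: algebra_simps sum_distrib_left)

lemma HB:
  fixes p :: "('i \<Rightarrow> complex) \<Rightarrow> real" and x0 :: "'i \<Rightarrow> complex"
  assumes sub: "\<And>x y. p (\<lambda>i. x i + y i) \<le> p x + p y"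
    and hom: "\<And>x t. t > 0 \<Longrightarrow> t * p x \<le> p (\<lambda>i. of_real t * x i)"
    and nn: "\<And>x. p x \<ge> 0"
  shows "\<exists>\<beta>. \<forall>t a. t * p x0 + (\<Sum>j<length gs. a j * \<beta> j) \<le> p (vv x0 gs t a)"
proof (induction gs rule: rev_induct)
  case Nil
  show ?case
  proof (intro exI allI)
    fix t and a :: "nat \<Rightarrow> real"
    have e: "vv x0 [] t a = (\<lambda>i. of_real t * x0 i)" unfolding vv_def by simp
    show "t * p x0 + (\<Sum>j<length []. a j * 0) \<le> p (vv x0 [] t a)"
    proof (cases "t > 0")
      case True then show ?thesis using hom[of t x0] e by simp
    next
      case False
      then have "t * p x0 \<le> 0" using nn[of x0] by (simp add: mult_nonpos_nonneg)
      then show ?thesis using nn[of "vv x0 [] t a"] by simp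
    qed
  qed
next
  case (snoc g gs)
  obtain \<beta> where IH: "\<And>t a. t * p x0 + (\<Sum>j<length gs. a j * \<beta> j) \<le> p (vv x0 gs t a)"
    using snoc.IH by blast
  define m where "m = length gs"
  define F where "F = (\<lambda>t a. t * p x0 + (\<Sum>j<m. a j * \<beta> j))"
  define X where "X = (\<lambda>t a. vv x0 gs t a)"
  have IH': "F t a \<le> p (X t a)" for t a unfolding F_def X_def m_def by (rule IH)
  have Fadd: "F (t + t') (\<lambda>j. a j + a' j) = F t a + F t' a'" for t t' a a'
    unfolding F_def by (simp add: algebra_simps sum.distrib)
  have Fscale: "F (c * t) (\<lambda>j. c * a j) = c * F t a" for c t a
    unfolding F_def by (simp add: algebra_simps sum_distrib_left)
  define L where "L = {F t a - p (\<lambda>i. X t a i - g i) | t a. True}"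
  have Lne: "L \<noteq> {}" unfolding L_def by blast
  have Lbd: "l \<le> p (\<lambda>i. X t' a' i + g i) - F t' a'" if "l \<in> L" for l t' a'
  proof -
    obtain t a where l: "l = F t a - p (\<lambda>i. X t a i - g i)" using \<open>l \<in> L\<close> unfolding L_def by blast
    have "F t a + F t' a' = F (t + t') (\<lambda>j. a j + a' j)" by (simp add: Fadd)
    also have "\<dots> \<le> p (X (t + t') (\<lambda>j. a j + a' j))" by (rule IH')
    also have "X (t + t') (\<lambda>j. a j + a' j) = (\<lambda>i. (X t a i - g i) + (X t' a' i + g i))"
      unfolding X_def by (simp add: vv_add fun_eq_iff)
    also have "p \<dots> \<le> p (\<lambda>i. X t a i - g i) + p (\<lambda>i. X t' a' i + g i)" by (rule sub)
    finally show ?thesis using l by simp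
  qed
  have bddL: "bdd_above L" using Lbd by (meson bdd_aboveI)
  define \<alpha> where "\<alpha> = Sup L"
  define \<beta>' where "\<beta>' = \<beta>(m := \<alpha>)"
  show ?case
  proof (intro exI[of _ \<beta>'] allI)
    fix t and a :: "nat \<Rightarrow> real"
    define s where "s = a m"
    have sumeq: "(\<Sum>j<length (gs @ [g]). a j * \<beta>' j) = (\<Sum>j<m. a j * \<beta> j) + s * \<alpha>"
      unfolding m_def s_def \<beta>'_def by simp
    have veq: "vv x0 (gs @ [g]) t a = (\<lambda>i. X t a i + of_real s * g i)"
      unfolding X_def s_def m_def by (simp add: vv_snoc fun_eq_iff)
    have goal: "F t a + s * \<alpha> \<le> p (\<lambda>i. X t a i + of_real s * g i)"
    proof (cases "s = 0")
      case True then show ?thesis using IH'[of t a] by simp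
    next
      case False
      show ?thesis
      proof (cases "s > 0")
        case True
        define t1 a1 where "t1 = t / s" and "a1 = (\<lambda>j. a j / s)"
        have Fs: "F t a = s * F t1 a1"
          using Fscale[of s t1 a1] True unfolding t1_def a1_def by simp
        have Xs: "(\<lambda>i. X t a i + of_real s * g i) = (\<lambda>i. of_real s * (X t1 a1 i + g i))"
        proof -
          have "X t a = X (s * t1) (\<lambda>j. s * a1 j)" unfolding t1_def a1_def using True by simp
          then show ?thesis unfolding X_def by (simp add: vv_scale fun_eq_iff algebra_simps)
        qed
        have "\<alpha> \<le> p (\<lambda>i. X t1 a1 i + g i) - F t1 a1"
          unfolding \<alpha>_def by (rule cSup_least[OF Lne]) (rule Lbd)
        then have "s * \<alpha> \<le> s * p (\<lambda>i. X t1 a1 i + g i) - s * F t1 a1"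
          using True by (simp add: right_diff_distrib[symmetric])
        also have "s * p (\<lambda>i. X t1 a1 i + g i) \<le> p (\<lambda>i. of_real s * (X t1 a1 i + g i))"
          by (rule hom[OF True])
        finally show ?thesis using Fs Xs by simp
      next
        case False2: False
        define r where "r = - s"
        have rpos: "r > 0" using False False2 r_def by simp
        define t1 a1 where "t1 = t / r" and "a1 = (\<lambda>j. a j / r)"
        have Fs: "F t a = r * F t1 a1"
          using Fscale[of r t1 a1] rpos unfolding t1_def a1_def by simp
        have Xs: "(\<lambda>i. X t a i + of_real s * g i) = (\<lambda>i. of_real r * (X t1 a1 i - g i))"
        proof -
          have "X t a = X (r * t1) (\<lambda>j. r * a1 j)" unfolding t1_def a1_def using rpos by simp
          then have "X t a i = of_real r * X t1 a1 i" for i unfolding X_def by (simp add: vv_scale)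
          moreover have "s = - r" using r_def by simp
          ultimately show ?thesis by (simp add: fun_eq_iff algebra_simps)
        qed
        have "F t1 a1 - p (\<lambda>i. X t1 a1 i - g i) \<in> L" unfolding L_def by blast
        then have "F t1 a1 - p (\<lambda>i. X t1 a1 i - g i) \<le> \<alpha>"
          unfolding \<alpha>_def by (rule cSup_upper[OF _ bddL])
        then have "r * F t1 a1 - r * p (\<lambda>i. X t1 a1 i - g i) \<le> r * \<alpha>"
          using rpos by (simp add: right_diff_distrib[symmetric])
        moreover have "r * p (\<lambda>i. X t1 a1 i - g i) \<le> p (\<lambda>i. of_real r * (X t1 a1 i - g i))"
          by (rule hom[OF rpos])
        ultimately show ?thesis using Fs Xs r_def by simp
      qed
    qed
    show "t * p x0 + (\<Sum>j<length (gs @ [g]). a j * \<beta>' j) \<le> p (vv x0 (gs @ [g]) t a)"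
      using goal unfolding sumeq veq F_def by simp
  qed
qed



definition red :: "nat \<Rightarrow> (nat \<Rightarrow> nat) \<Rightarrow> (nat \<Rightarrow> nat) \<Rightarrow> nat \<Rightarrow> nat" where
  "red k n i = restrict (\<lambda>j. if i j < n j then i j else i j - n j) {..<k}"

definition kap :: "nat \<Rightarrow> (nat \<Rightarrow> nat) \<Rightarrow> nat \<Rightarrow> nat \<Rightarrow> complex" where
  "kap k n j p = (if p < n j then 1 else if j = k - 1 then - \<i> else \<i>)"

definition Wv :: "nat \<Rightarrow> (nat \<Rightarrow> nat) \<Rightarrow> (nat \<Rightarrow> nat \<Rightarrow> real) \<Rightarrow> nat \<Rightarrow> nat \<Rightarrow> complex" where
  "Wv k n y j p = of_real (y j p) + (if j = k - 1 then - \<i> else \<i>) * of_real (y j (p + n j))"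

lemma lt_eq:
  assumes k: "k \<ge> 1"
  shows "lam_tilde k n lam i = Re (lam (red k n i) * (\<Prod>j<k. kap k n j (i j)))"
proof -
  define t where "t = card {j. j < k - 1 \<and> n j \<le> i j}"
  have "(\<Prod>j<k-1. kap k n j (i j)) = (\<Prod>j<k-1. if n j \<le> i j then \<i> else 1)"
    by (rule prod.cong) (auto simp: kap_def)
  also have "\<dots> = \<i> ^ card ({..<k-1} \<inter> {j. n j \<le> i j})"
    by (simp add: prod.If_cases)
  also have "{..<k-1} \<inter> {j. n j \<le> i j} = {j. j < k - 1 \<and> n j \<le> i j}" by auto
  finally have p1: "(\<Prod>j<k-1. kap k n j (i j)) = \<i> ^ t" unfolding t_def .
  have "(\<Prod>j<k. kap k n j (i j)) = (\<Prod>j<Suc (k-1). kap k n j (i j))" using k by simp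
  also have "\<dots> = \<i> ^ t * kap k n (k-1) (i (k-1))" by (simp only: prod.lessThan_Suc p1)
  finally have p: "(\<Prod>j<k. kap k n j (i j)) = \<i> ^ t * kap k n (k-1) (i (k-1))" .
  show ?thesis
    unfolding lam_tilde_def Let_def red_def[symmetric] t_def[symmetric] p
    by (auto simp: kap_def mult.commute mult.left_commute)
qed

lemma fiber_eq:
  assumes i': "i' \<in> idx k n"
  shows "{x \<in> idx k (\<lambda>j. 2 * n j). red k n x = i'} = PiE {..<k} (\<lambda>j. {i' j, i' j + n j})"
proof (intro equalityI subsetI)
  fix x assume "x \<in> {x \<in> idx k (\<lambda>j. 2 * n j). red k n x = i'}"
  then have x: "x \<in> PiE {..<k} (\<lambda>j. {..<2 * n j})" and r: "red k n x = i'" by (auto simp: idx_def)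
  show "x \<in> PiE {..<k} (\<lambda>j. {i' j, i' j + n j})"
  proof (rule PiE_I)
    fix j assume "j \<in> {..<k}"
    then have "i' j = (if x j < n j then x j else x j - n j)" using r by (auto simp: red_def)
    then show "x j \<in> {i' j, i' j + n j}" by auto
  next
    fix j assume "j \<notin> {..<k}" then show "x j = undefined" using x by (auto simp: PiE_iff extensional_def)
  qed
next
  fix x assume x: "x \<in> PiE {..<k} (\<lambda>j. {i' j, i' j + n j})"
  have i'b: "\<And>j. j < k \<Longrightarrow> i' j < n j" and i'e: "\<And>j. \<not> j < k \<Longrightarrow> i' j = undefined"
    using i' by (auto simp: idx_def PiE_iff extensional_def)
  have "x \<in> idx k (\<lambda>j. 2 * n j)" unfolding idx_def
  proof (rule PiE_I)
    fix j assume j: "j \<in> {..<k}"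
    then have "x j = i' j \<or> x j = i' j + n j" using x by (auto simp: PiE_iff)
    then show "x j \<in> {..<2 * n j}" using i'b[of j] j by auto
  next
    fix j assume "j \<notin> {..<k}" then show "x j = undefined" using x by (auto simp: PiE_iff extensional_def)
  qed
  moreover have "red k n x = i'"
  proof
    fix j show "red k n x j = i' j"
    proof (cases "j < k")
      case True
      then have "x j = i' j \<or> x j = i' j + n j" using x by (auto simp: PiE_iff)
      then show ?thesis using i'b[OF True] True by (auto simp: red_def)
    next
      case False then show ?thesis using i'e[OF False] by (simp add: red_def)
    qed
  qed
  ultimately show "x \<in> {x \<in> idx k (\<lambda>j. 2 * n j). red k n x = i'}" by simp
qed

lemma red_in:
  assumes "x \<in> idx k (\<lambda>j. 2 * n j)" shows "red k n x \<in> idx k n"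
proof -
  have *: "\<And>j. j < k \<Longrightarrow> x j < 2 * n j" using assms by (auto simp: idx_def PiE_iff)
  have b: "(if x j < n j then x j else x j - n j) < n j" if "j < k" for j using *[OF that] by auto
  show ?thesis unfolding idx_def red_def by (simp add: restrict_PiE_iff b)
qed

lemma Re_mult_ofr: "Re (z * of_real r) = Re z * r" by simp

lemma expand:
  assumes k: "k \<ge> 1"
  shows "(\<Sum>i\<in>idx k (\<lambda>j. 2 * n j). lam_tilde k n lam i * (\<Prod>j<k. y j (i j)))
     = Re (\<Sum>i'\<in>idx k n. lam i' * (\<Prod>j<k. Wv k n y j (i' j)))"
proof -
  define h where "h = (\<lambda>j p. kap k n j p * of_real (y j p))"
  define I2 where "I2 = idx k (\<lambda>j. 2 * n j)"
  have "(\<Sum>i\<in>I2. lam_tilde k n lam i * (\<Prod>j<k. y j (i j)))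
      = (\<Sum>i\<in>I2. Re (lam (red k n i) * (\<Prod>j<k. h j (i j))))"
  proof (rule sum.cong[OF refl])
    fix i
    have "(\<Prod>j<k. h j (i j)) = (\<Prod>j<k. kap k n j (i j)) * of_real (\<Prod>j<k. y j (i j))"
      unfolding h_def by (simp add: prod.distrib)
    then have "lam (red k n i) * (\<Prod>j<k. h j (i j)) = (lam (red k n i) * (\<Prod>j<k. kap k n j (i j))) * of_real (\<Prod>j<k. y j (i j))"
      by (simp only: mult.assoc)
    then show "lam_tilde k n lam i * (\<Prod>j<k. y j (i j)) = Re (lam (red k n i) * (\<Prod>j<k. h j (i j)))"
      unfolding lt_eq[OF k] by (simp only: Re_mult_ofr)
  qed
  also have "\<dots> = Re (\<Sum>i\<in>I2. lam (red k n i) * (\<Prod>j<k. h j (i j)))" by (simp add: Re_sum)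
  also have "(\<Sum>i\<in>I2. lam (red k n i) * (\<Prod>j<k. h j (i j)))
     = (\<Sum>i'\<in>idx k n. \<Sum>i\<in>{x \<in> I2. red k n x = i'}. lam (red k n i) * (\<Prod>j<k. h j (i j)))"
    by (rule sum.group[symmetric]) (auto simp: I2_def finite_idx red_in)
  also have "\<dots> = (\<Sum>i'\<in>idx k n. lam i' * (\<Prod>j<k. Wv k n y j (i' j)))"
  proof (rule sum.cong[OF refl])
    fix i' assume i': "i' \<in> idx k n"
    have i'b: "\<And>j. j < k \<Longrightarrow> i' j < n j" using i' by (auto simp: idx_def PiE_iff)
    have "(\<Sum>i\<in>{x \<in> I2. red k n x = i'}. lam (red k n i) * (\<Prod>j<k. h j (i j)))
        = (\<Sum>i\<in>{x \<in> I2. red k n x = i'}. lam i' * (\<Prod>j<k. h j (i j)))"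
      by (rule sum.cong) auto
    also have "\<dots> = lam i' * (\<Sum>i\<in>PiE {..<k} (\<lambda>j. {i' j, i' j + n j}). \<Prod>j<k. h j (i j))"
      unfolding I2_def fiber_eq[OF i'] by (simp add: sum_distrib_left)
    also have "(\<Sum>i\<in>PiE {..<k} (\<lambda>j. {i' j, i' j + n j}). \<Prod>j<k. h j (i j))
       = (\<Prod>j<k. \<Sum>p\<in>{i' j, i' j + n j}. h j p)"
      by (rule prod_sum_PiE[symmetric]) auto
    also have "\<dots> = (\<Prod>j<k. Wv k n y j (i' j))"
    proof (rule prod.cong[OF refl])
      fix j assume "j \<in> {..<k}"
      then have b: "i' j < n j" using i'b by simp
      then show "(\<Sum>p\<in>{i' j, i' j + n j}. h j p) = Wv k n y j (i' j)"
        by (simp add: h_def kap_def Wv_def)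
    qed
    finally show "(\<Sum>i\<in>{x \<in> I2. red k n x = i'}. lam (red k n i) * (\<Prod>j<k. h j (i j)))
        = lam i' * (\<Prod>j<k. Wv k n y j (i' j))" .
  qed
  finally show ?thesis unfolding I2_def .
qed



lemma lt_A:
  assumes k: "k \<ge> 1" and i: "i \<in> idx k n"
  shows "lam_tilde k n lam i = Re (lam i)"
proof -
  have b: "\<And>j. j < k \<Longrightarrow> i j < n j" and e: "\<And>j. \<not> j < k \<Longrightarrow> i j = undefined"
    using i by (auto simp: idx_def PiE_iff extensional_def)
  have r: "restrict (\<lambda>j. if i j < n j then i j else i j - n j) {..<k} = i"
    by (rule ext) (auto simp: b e)
  have c: "{j. j < k - 1 \<and> n j \<le> i j} = {}"
  proof -
    have False if "j < k - 1" "n j \<le> i j" for j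
    proof -
      have "j < k" using that(1) by linarith
      then show False using b[of j] that(2) by simp
    qed
    then show ?thesis by auto
  qed
  have l: "i (k - 1) < n (k - 1)" using b k by simp
  show ?thesis unfolding lam_tilde_def Let_def r c using l by simp
qed

lemma obj_eq:
  assumes k: "k \<ge> 1"
  shows "lp_objective k n \<rho> lam = Re (\<Sum>i\<in>idx k n. \<rho> i * lam i)"
proof -
  define E where "E = PiE {..<k} (\<lambda>j. if j = k - 1 then {n j..<2 * n j} else {..<n j})"
  define hh where "hh = (\<lambda>i. restrict (\<lambda>j. if j = k - 1 then i j - n j else i j) {..<k})"
  define gg where "gg = (\<lambda>i. restrict (\<lambda>j. if j = k - 1 then i j + n j else i j) {..<k})"
  have s1: "(\<Sum>i\<in>idx k n. Re (\<rho> i) * lam_tilde k n lam i) = (\<Sum>i\<in>idx k n. Re (\<rho> i) * Re (lam i))"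
    by (rule sum.cong) (auto simp: lt_A[OF k])
  have s2: "(\<Sum>i\<in>E. Im (\<rho> (restrict (\<lambda>j. if j = k - 1 then i j - n j else i j) {..<k})) * lam_tilde k n lam i) = (\<Sum>i\<in>idx k n. Im (\<rho> i) * Im (lam i))"
  proof (rule sum.reindex_bij_witness[of E gg hh])
    fix a assume a: "a \<in> E"
    have aa: "\<And>j. j < k \<Longrightarrow> a j \<in> (if j = k - 1 then {n j..<2 * n j} else {..<n j})"
      and e: "\<And>j. \<not> j < k \<Longrightarrow> a j = undefined"
      using a by (auto simp: E_def PiE_iff extensional_def)
    have b1: "\<And>j. j < k \<Longrightarrow> j \<noteq> k - 1 \<Longrightarrow> a j < n j" using aa by fastforce
    have "a (k-1) \<in> {n (k-1)..<2 * n (k-1)}" using aa[of "k-1"] k by simp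
    then have b2: "n (k-1) \<le> a (k-1)" and b3: "a (k-1) < 2 * n (k-1)" by auto
    show "gg (hh a) = a" unfolding gg_def hh_def by (rule ext) (use b2 in \<open>auto simp: e\<close>)
    show "hh a \<in> idx k n" unfolding hh_def idx_def using b1 b2 b3 by (auto simp: restrict_PiE_iff)
    have r: "restrict (\<lambda>j. if a j < n j then a j else a j - n j) {..<k} = hh a"
      unfolding hh_def by (rule ext) (use b1 b2 in auto)
    have c: "{j. j < k - 1 \<and> n j \<le> a j} = {}"
    proof -
      have False if "j < k - 1" "n j \<le> a j" for j
      proof -
        have "j < k" "j \<noteq> k - 1" using that(1) by linarith+
        then show False using b1[of j] that(2) by simp
      qed
      then show ?thesis by auto
    qed
    have l: "\<not> a (k - 1) < n (k - 1)" using b2 by simp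
    have "lam_tilde k n lam a = Im (lam (hh a))" unfolding lam_tilde_def Let_def r c using l by simp
    then show "Im (\<rho> (hh a)) * Im (lam (hh a)) = Im (\<rho> (restrict (\<lambda>j. if j = k - 1 then a j - n j else a j) {..<k})) * lam_tilde k n lam a"
      by (simp add: hh_def)
  next
    fix b assume b: "b \<in> idx k n"
    have b1: "\<And>j. j < k \<Longrightarrow> b j < n j" and e: "\<And>j. \<not> j < k \<Longrightarrow> b j = undefined"
      using b by (auto simp: idx_def PiE_iff extensional_def)
    show "hh (gg b) = b" unfolding gg_def hh_def by (rule ext) (auto simp: e)
    show "gg b \<in> E" unfolding gg_def E_def using b1 k by (auto simp: restrict_PiE_iff)
  qed
  show ?thesis
    unfolding lp_objective_def E_def[symmetric] s1 s2
    by (simp add: Re_sum sum_subtractf[symmetric])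
qed



definition Bf :: "nat \<Rightarrow> (nat \<Rightarrow> nat) \<Rightarrow> ((nat \<Rightarrow> nat) \<Rightarrow> real) \<Rightarrow> (nat \<Rightarrow> nat \<Rightarrow> real) \<Rightarrow> real" where
  "Bf k d L y = (\<Sum>i\<in>idx k d. L i * (\<Prod>j<k. y j (i j)))"

lemma Bf_lin:
  assumes q: "q < k"
  shows "Bf k d L (y(q := x)) = (\<Sum>p<d q. x p * (\<Sum>i\<in>{i \<in> idx k d. i q = p}. L i * (\<Prod>j\<in>{..<k}-{q}. y j (i j))))"
proof -
  have pr: "(\<Prod>j<k. (y(q := x)) j (i j)) = x (i q) * (\<Prod>j\<in>{..<k}-{q}. y j (i j))" for i
  proof -
    have "(\<Prod>j<k. (y(q := x)) j (i j)) = (y(q := x)) q (i q) * (\<Prod>j\<in>{..<k}-{q}. (y(q := x)) j (i j))"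
      using q by (subst prod.remove[of _ q]) auto
    also have "(\<Prod>j\<in>{..<k}-{q}. (y(q := x)) j (i j)) = (\<Prod>j\<in>{..<k}-{q}. y j (i j))"
      by (rule prod.cong) auto
    finally show ?thesis by simp
  qed
  have "Bf k d L (y(q := x)) = (\<Sum>i\<in>idx k d. L i * (x (i q) * (\<Prod>j\<in>{..<k}-{q}. y j (i j))))"
    unfolding Bf_def pr ..
  also have "\<dots> = (\<Sum>p\<in>{..<d q}. \<Sum>i\<in>{i \<in> idx k d. i q = p}. L i * (x (i q) * (\<Prod>j\<in>{..<k}-{q}. y j (i j))))"
    by (rule sum.group[symmetric]) (use q in \<open>auto simp: finite_idx idx_def PiE_iff finite_PiE\<close>)
  also have "\<dots> = (\<Sum>p<d q. x p * (\<Sum>i\<in>{i \<in> idx k d. i q = p}. L i * (\<Prod>j\<in>{..<k}-{q}. y j (i j))))"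
  proof (rule sum.cong[OF refl])
    fix p
    have "(\<Sum>i\<in>{i \<in> idx k d. i q = p}. L i * (x (i q) * (\<Prod>j\<in>{..<k}-{q}. y j (i j))))
       = (\<Sum>i\<in>{i \<in> idx k d. i q = p}. x p * (L i * (\<Prod>j\<in>{..<k}-{q}. y j (i j))))"
      by (rule sum.cong) auto
    then show "(\<Sum>i\<in>{i \<in> idx k d. i q = p}. L i * (x (i q) * (\<Prod>j\<in>{..<k}-{q}. y j (i j))))
       = x p * (\<Sum>i\<in>{i \<in> idx k d. i q = p}. L i * (\<Prod>j\<in>{..<k}-{q}. y j (i j)))"
      by (simp add: sum_distrib_left)
  qed
  finally show ?thesis .
qed

lemma mlb:
  fixes L :: "(nat \<Rightarrow> nat) \<Rightarrow> real" and d N :: "nat \<Rightarrow> nat" and c :: "nat \<Rightarrow> nat \<Rightarrow> nat \<Rightarrow> real"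
  assumes feas: "\<forall>s\<in>idx k N. \<bar>\<Sum>i\<in>idx k d. L i * (\<Prod>j<k. c j (i j) (s j))\<bar> \<le> 1"
    and inv: "\<And>j a. j < k \<Longrightarrow> l2r (d j) a \<le> K * linf (N j) (colmap (d j) (c j) a)"
    and K: "K \<ge> 0"
  shows "\<bar>Bf k d L y\<bar> \<le> K ^ k * (\<Prod>j<k. l2r (d j) (y j))"
proof -
  have Q: "\<forall>y. (\<forall>j. q \<le> j \<longrightarrow> j < k \<longrightarrow> (\<exists>s<N j. y j = (\<lambda>p. c j p s)))
             \<longrightarrow> \<bar>Bf k d L y\<bar> \<le> K ^ q * (\<Prod>j<q. l2r (d j) (y j))" if "q \<le> k" for q
    using that
  proof (induction q)
    case 0
    show ?case
    proof (intro allI impI)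
      fix y assume rows: "\<forall>j. 0 \<le> j \<longrightarrow> j < k \<longrightarrow> (\<exists>s<N j. y j = (\<lambda>p. c j p s))"
      define s' where "s' = restrict (\<lambda>j. SOME s. s < N j \<and> y j = (\<lambda>p. c j p s)) {..<k}"
      have sp: "s' j < N j \<and> y j = (\<lambda>p. c j p (s' j))" if "j < k" for j
        using someI_ex[OF rows[rule_format, OF _ that]] that unfolding s'_def by simp
      have "s' \<in> idx k N" unfolding idx_def s'_def using sp
        by (auto simp: restrict_PiE_iff s'_def)
      moreover have "Bf k d L y = (\<Sum>i\<in>idx k d. L i * (\<Prod>j<k. c j (i j) (s' j)))"
        unfolding Bf_def by (intro sum.cong refl arg_cong2[where f="(*)"] prod.cong) (auto dest: sp)
      ultimately show "\<bar>Bf k d L y\<bar> \<le> K ^ 0 * (\<Prod>j<0. l2r (d j) (y j))" using feas by simp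
    qed
  next
    case (Suc q)
    then have q: "q < k" by simp
    have IH: "\<And>y. (\<forall>j. q \<le> j \<longrightarrow> j < k \<longrightarrow> (\<exists>s<N j. y j = (\<lambda>p. c j p s)))
             \<Longrightarrow> \<bar>Bf k d L y\<bar> \<le> K ^ q * (\<Prod>j<q. l2r (d j) (y j))" using Suc by simp
    show ?case
    proof (intro allI impI)
      fix y assume rows: "\<forall>j. Suc q \<le> j \<longrightarrow> j < k \<longrightarrow> (\<exists>s<N j. y j = (\<lambda>p. c j p s))"
      define a where "a = (\<lambda>p. \<Sum>i\<in>{i \<in> idx k d. i q = p}. L i * (\<Prod>j\<in>{..<k}-{q}. y j (i j)))"
      define P where "P = (\<Prod>j<q. l2r (d j) (y j))"
      have Pnn: "P \<ge> 0" unfolding P_def by (simp add: prod_nonneg l2r_nonneg)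
      have lin: "Bf k d L (y(q := x)) = (\<Sum>p<d q. x p * a p)" for x
        unfolding a_def by (rule Bf_lin[OF q])
      have cm: "\<bar>colmap (d q) (c q) a s\<bar> \<le> K ^ q * P" if s: "s < N q" for s
      proof -
        have "colmap (d q) (c q) a s = Bf k d L (y(q := (\<lambda>p. c q p s)))"
          unfolding lin colmap_def by (simp add: mult.commute)
        moreover have "\<bar>Bf k d L (y(q := (\<lambda>p. c q p s)))\<bar> \<le> K ^ q * (\<Prod>j<q. l2r (d j) ((y(q := (\<lambda>p. c q p s))) j))"
        proof (rule IH, intro allI impI)
          fix j assume "q \<le> j" "j < k"
          then show "\<exists>s'<N j. (y(q := (\<lambda>p. c q p s))) j = (\<lambda>p. c j p s')"
            using rows s by (cases "j = q") auto
        qed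
        moreover have "(\<Prod>j<q. l2r (d j) ((y(q := (\<lambda>p. c q p s))) j)) = P"
          unfolding P_def by (rule prod.cong) auto
        ultimately show ?thesis by simp
      qed
      have "linf (N q) (colmap (d q) (c q) a) \<le> K ^ q * P"
        by (rule linf_le) (use cm Pnn K in auto)
      then have la: "l2r (d q) a \<le> K * (K ^ q * P)"
        using inv[OF q, of a] K by (meson mult_left_mono order_trans)
      have "Bf k d L y = (\<Sum>p<d q. y q p * a p)" using lin[of "y q"] by simp
      then have "\<bar>Bf k d L y\<bar> \<le> (\<Sum>p<d q. \<bar>y q p\<bar> * \<bar>a p\<bar>)"
        by (simp add: abs_mult[symmetric] sum_abs)
      also have "\<dots> \<le> l2r (d q) (y q) * l2r (d q) a" unfolding l2r_L2 by (rule L2_set_mult_ineq)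
      also have "\<dots> \<le> l2r (d q) (y q) * (K * (K ^ q * P))"
        by (rule mult_left_mono[OF la l2r_nonneg])
      also have "\<dots> = K ^ Suc q * (\<Prod>j<Suc q. l2r (d j) (y j))" unfolding P_def by simp
      finally show "\<bar>Bf k d L y\<bar> \<le> K ^ Suc q * (\<Prod>j<Suc q. l2r (d j) (y j))" .
    qed
  qed
  show ?thesis using Q[of k] by simp
qed



lemma sum_split: "(\<Sum>r<R1+R2. f r) = (\<Sum>r<R1. f r) + (\<Sum>r<R2. f (r + R1))"
  for f :: "nat \<Rightarrow> 'a::comm_monoid_add"
  by (induct R2) (auto simp: ac_simps)

lemma l2c_Wv: "l2c (n j) (Wv k n y j) = l2r (2 * n j) (y j)"
proof -
  have p: "(cmod (Wv k n y j p))\<^sup>2 = (y j p)\<^sup>2 + (y j (p + n j))\<^sup>2" for p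
    by (simp add: Wv_def cmod_power2)
  have "(\<Sum>q<2 * n j. (y j q)\<^sup>2) = (\<Sum>q<n j + n j. (y j q)\<^sup>2)" by (simp add: mult_2)
  also have "\<dots> = (\<Sum>p<n j. (cmod (Wv k n y j p))\<^sup>2)" unfolding sum_split p by (simp add: sum.distrib add.commute)
  finally show ?thesis unfolding l2c_def l2r_def by simp
qed

lemma l2c_cong: "(\<And>p. p < d \<Longrightarrow> v p = w p) \<Longrightarrow> l2c d v = l2c d w"
  unfolding l2c_def by simp

lemma feas_bound:
  assumes k: "k \<ge> 1" and feas: "lp_feasible k n N c lam"
    and inv: "\<And>j a. j < k \<Longrightarrow> l2r (2 * n j) a \<le> K * linf (N j) (colmap (2 * n j) (c j) a)"
    and K: "K \<ge> 0"
  shows "\<bar>Re (\<Sum>i\<in>idx k n. lam i * (\<Prod>j<k. v j (i j)))\<bar> \<le> K ^ k * (\<Prod>j<k. l2c (n j) (v j))"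
proof -
  define y where "y = (\<lambda>j q. if q < n j then Re (v j q) else (if j = k - 1 then -1 else 1) * Im (v j (q - n j)))"
  have W: "Wv k n y j p = v j p" if "p < n j" for j p
    using that by (simp add: Wv_def y_def complex_eq_iff)
  have "(\<Sum>i\<in>idx k n. lam i * (\<Prod>j<k. v j (i j))) = (\<Sum>i\<in>idx k n. lam i * (\<Prod>j<k. Wv k n y j (i j)))"
  proof (rule sum.cong[OF refl])
    fix i assume "i \<in> idx k n"
    then have b: "\<And>j. j < k \<Longrightarrow> i j < n j" by (auto simp: idx_def PiE_iff)
    have "(\<Prod>j<k. v j (i j)) = (\<Prod>j<k. Wv k n y j (i j))"
      by (rule prod.cong[OF refl]) (simp add: W b)
    then show "lam i * (\<Prod>j<k. v j (i j)) = lam i * (\<Prod>j<k. Wv k n y j (i j))" by simp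
  qed
  also have "Re \<dots> = Bf k (\<lambda>j. 2 * n j) (lam_tilde k n lam) y"
    unfolding Bf_def expand[OF k] ..
  finally have e: "Re (\<Sum>i\<in>idx k n. lam i * (\<Prod>j<k. v j (i j))) = Bf k (\<lambda>j. 2 * n j) (lam_tilde k n lam) y" .
  have "\<bar>Bf k (\<lambda>j. 2 * n j) (lam_tilde k n lam) y\<bar> \<le> K ^ k * (\<Prod>j<k. l2r (2 * n j) (y j))"
    by (rule mlb) (use feas inv K in \<open>auto simp: lp_feasible_def\<close>)
  also have "(\<Prod>j<k. l2r (2 * n j) (y j)) = (\<Prod>j<k. l2c (n j) (v j))"
  proof (rule prod.cong[OF refl])
    fix j
    show "l2r (2 * n j) (y j) = l2c (n j) (v j)"
    proof -
      have "l2r (2 * n j) (y j) = l2c (n j) (Wv k n y j)" by (rule l2c_Wv[symmetric])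
      also have "\<dots> = l2c (n j) (v j)" by (rule l2c_cong) (simp add: W)
      finally show ?thesis .
    qed
  qed
  finally show ?thesis using e by simp
qed



lemma hb_app:
  assumes k: "k \<ge> 1"
  shows "\<exists>lam. (\<forall>\<sigma>. Re (\<Sum>i\<in>idx k n. \<sigma> i * lam i) \<le> proj_norm k n \<sigma>)
              \<and> proj_norm k n \<rho> \<le> Re (\<Sum>i\<in>idx k n. \<rho> i * lam i)"
proof -
  obtain xs where xs: "set xs = idx k n" "distinct xs" using finite_distinct_list[OF finite_idx] by blast
  define L where "L = length xs"
  define gs where "gs = map (\<lambda>i0 i. if i = i0 then (1::complex) else 0) xs @ map (\<lambda>i0 i. if i = i0 then \<i> else 0) xs"
  have lg: "length gs = L + L" unfolding gs_def L_def by simp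
  have g1: "gs ! q = (\<lambda>i. if i = xs ! q then 1 else 0)" if "q < L" for q
    using that unfolding gs_def L_def by (simp add: nth_append)
  have g2: "gs ! (q + L) = (\<lambda>i. if i = xs ! q then \<i> else 0)" if "q < L" for q
    using that unfolding gs_def L_def by (simp add: nth_append)
  have sub: "\<And>x y. proj_norm k n (\<lambda>i. x i + y i) \<le> proj_norm k n x + proj_norm k n y"
    by (rule pn_add[OF k])
  have hom: "t * proj_norm k n x \<le> proj_norm k n (\<lambda>i. of_real t * x i)" if t: "t > 0" for x t
  proof -
    have "proj_norm k n (\<lambda>i. of_real (1/t) * (of_real t * x i)) \<le> \<bar>1/t\<bar> * proj_norm k n (\<lambda>i. of_real t * x i)"
      using pn_scale[OF k, where z="of_real (1/t)" and \<sigma>="\<lambda>i. of_real t * x i" and n=n] unfolding norm_of_real .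
    moreover have "(\<lambda>i. of_real (1/t) * (of_real t * x i)) = x" using t by (simp add: fun_eq_iff)
    ultimately have "proj_norm k n x \<le> \<bar>1/t\<bar> * proj_norm k n (\<lambda>i. of_real t * x i)" by simp
    then show ?thesis using t by (simp add: field_simps)
  qed
  obtain \<beta> where hb: "\<And>t a. t * proj_norm k n \<rho> + (\<Sum>j<length gs. a j * \<beta> j) \<le> proj_norm k n (vv \<rho> gs t a)"
    using HB[of "proj_norm k n" \<rho> gs] sub hom pn_nonneg[OF k] by blast
  have bij: "bij_betw ((!) xs) {..<L} (idx k n)" using xs unfolding L_def by (intro bij_betw_nth) auto
  have inj: "inj_on ((!) xs) {..<L}" using bij by (simp add: bij_betw_def)
  define lam where "lam = (\<lambda>i. let q = the_inv_into {..<L} ((!) xs) i in Complex (\<beta> q) (- \<beta> (q + L)))"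
  have lamq: "lam (xs ! q) = Complex (\<beta> q) (- \<beta> (q + L))" if "q < L" for q
    unfolding lam_def Let_def using the_inv_into_f_f[OF inj] that by simp
  define coef where "coef = (\<lambda>\<sigma> j. if j < L then Re (\<sigma> (xs ! j)) else Im (\<sigma> (xs ! (j - L))))"
  have reidx: "(\<Sum>q<L. F (xs ! q)) = (\<Sum>i\<in>idx k n. F i)" for F :: "(nat \<Rightarrow> nat) \<Rightarrow> 'a::comm_monoid_add"
    using sum.reindex_bij_betw[OF bij, of F] by simp
  have C1: "vv \<rho> gs 0 (coef \<sigma>) i = (if i \<in> idx k n then \<sigma> i else 0)" for \<sigma> i
  proof -
    have "vv \<rho> gs 0 (coef \<sigma>) i = (\<Sum>j<L + L. of_real (coef \<sigma> j) * (gs ! j) i)"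
      unfolding vv_def lg by simp
    also have "\<dots> = (\<Sum>q<L. of_real (coef \<sigma> q) * (gs ! q) i + of_real (coef \<sigma> (q + L)) * (gs ! (q + L)) i)"
      unfolding sum_split sum.distrib ..
    also have "\<dots> = (\<Sum>q<L. (\<lambda>i0. if i = i0 then \<sigma> i0 else 0) (xs ! q))"
      by (rule sum.cong[OF refl]) (auto simp: g1 g2 coef_def complex_eq_iff)
    also have "\<dots> = (\<Sum>i0\<in>idx k n. if i = i0 then \<sigma> i0 else 0)" by (rule reidx)
    also have "\<dots> = (if i \<in> idx k n then \<sigma> i else 0)" using finite_idx by simp
    finally show ?thesis .
  qed
  have C2: "(\<Sum>j<length gs. coef \<sigma> j * \<beta> j) = Re (\<Sum>i\<in>idx k n. \<sigma> i * lam i)" for \<sigma>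
  proof -
    have "(\<Sum>j<length gs. coef \<sigma> j * \<beta> j) = (\<Sum>q<L. coef \<sigma> q * \<beta> q + coef \<sigma> (q + L) * \<beta> (q + L))"
      unfolding lg sum_split sum.distrib ..
    also have "\<dots> = (\<Sum>q<L. (\<lambda>i. Re (\<sigma> i * lam i)) (xs ! q))"
      by (rule sum.cong[OF refl]) (auto simp: coef_def lamq)
    also have "\<dots> = (\<Sum>i\<in>idx k n. Re (\<sigma> i * lam i))" by (rule reidx)
    finally show ?thesis by (simp add: Re_sum)
  qed
  show ?thesis
  proof (intro exI conjI allI)
    fix \<sigma>
    have "0 * proj_norm k n \<rho> + (\<Sum>j<length gs. coef \<sigma> j * \<beta> j) \<le> proj_norm k n (vv \<rho> gs 0 (coef \<sigma>))"
      by (rule hb)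
    also have "proj_norm k n (vv \<rho> gs 0 (coef \<sigma>)) = proj_norm k n \<sigma>" by (rule pn_cong) (simp add: C1)
    finally show "Re (\<Sum>i\<in>idx k n. \<sigma> i * lam i) \<le> proj_norm k n \<sigma>" by (simp add: C2)
  next
    have "1 * proj_norm k n \<rho> + (\<Sum>j<length gs. (- coef \<rho> j) * \<beta> j) \<le> proj_norm k n (vv \<rho> gs 1 (\<lambda>j. - coef \<rho> j))"
      by (rule hb)
    also have "proj_norm k n (vv \<rho> gs 1 (\<lambda>j. - coef \<rho> j)) = proj_norm k n (\<lambda>_. 0)"
    proof (rule pn_cong)
      fix i assume i: "i \<in> idx k n"
      have "vv \<rho> gs 1 (\<lambda>j. - coef \<rho> j) i = \<rho> i - vv \<rho> gs 0 (coef \<rho>) i"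
        unfolding vv_def by (simp add: sum_negf)
      then show "vv \<rho> gs 1 (\<lambda>j. - coef \<rho> j) i = 0" using C1[of \<rho> i] i by simp
    qed
    also have "\<dots> \<le> 0" by (rule pn_zero)
    finally have "proj_norm k n \<rho> - (\<Sum>j<length gs. coef \<rho> j * \<beta> j) \<le> 0" by (simp add: sum_negf)
    then show "proj_norm k n \<rho> \<le> Re (\<Sum>i\<in>idx k n. \<rho> i * lam i)" by (simp add: C2)
  qed
qed



theorem theorem2:
  fixes k m :: nat and n N :: "nat \<Rightarrow> nat"
    and c :: "nat \<Rightarrow> nat \<Rightarrow> nat \<Rightarrow> real"
    and \<rho> :: "(nat \<Rightarrow> nat) \<Rightarrow> complex"
  assumes "k \<ge> 1" and "m \<ge> 2"
    and "\<forall>j<k. injective_map (2 * n j) (N j) (c j)"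
    and "\<forall>j<k. opnorm (2 * n j) (N j) (c j) \<le> 1"
    and "\<forall>j<k. invnorm (2 * n j) (N j) (c j) \<le> real m / (real m - 1)"
  shows "bdd_above (lp_objective k n \<rho> ` {lam. lp_feasible k n N c lam})
     \<and> proj_norm k n \<rho> \<le> lp_value k n N c \<rho>
     \<and> lp_value k n N c \<rho> \<le> (real m / (real m - 1)) ^ k * proj_norm k n \<rho>"
proof -
  note k = assms(1)
  define K where "K = real m / (real m - 1)"
  have Kpos: "K > 0" unfolding K_def using assms(2) by simp
  have inv: "\<And>j a. j < k \<Longrightarrow> l2r (2 * n j) a \<le> K * linf (N j) (colmap (2 * n j) (c j) a)"
    unfolding K_def using assms(3,5) by (intro inv_bound) auto
  have rows: "\<And>j s. j < k \<Longrightarrow> s < N j \<Longrightarrow> l2r (2 * n j) (\<lambda>p. c j p s) \<le> 1"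
    using assms(4) by (intro row_bound) auto
  have UB: "lp_objective k n \<rho> lam \<le> K ^ k * proj_norm k n \<rho>" if feas: "lp_feasible k n N c lam" for lam
  proof -
    have "Re (\<Sum>i\<in>idx k n. \<rho> i * lam i) / K ^ k \<le> proj_norm k n \<rho>"
    proof (rule pn_ge[OF k])
      fix R u assume rep: "isrep k n \<rho> R u"
      have "(\<Sum>i\<in>idx k n. \<rho> i * lam i) = (\<Sum>i\<in>idx k n. (\<Sum>r<R. \<Prod>j<k. u r j (i j)) * lam i)"
        by (rule sum.cong[OF refl]) (use rep in \<open>simp add: isrep_def\<close>)
      also have "\<dots> = (\<Sum>r<R. \<Sum>i\<in>idx k n. lam i * (\<Prod>j<k. u r j (i j)))"
        by (simp add: sum_distrib_right sum_distrib_left sum.swap[of _ "idx k n"] mult.commute)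
      finally have "Re (\<Sum>i\<in>idx k n. \<rho> i * lam i) = (\<Sum>r<R. Re (\<Sum>i\<in>idx k n. lam i * (\<Prod>j<k. u r j (i j))))"
        by (simp add: Re_sum)
      also have "\<dots> \<le> (\<Sum>r<R. K ^ k * (\<Prod>j<k. l2c (n j) (u r j)))"
      proof (rule sum_mono)
        fix r
        show "Re (\<Sum>i\<in>idx k n. lam i * (\<Prod>j<k. u r j (i j))) \<le> K ^ k * (\<Prod>j<k. l2c (n j) (u r j))"
          using feas_bound[OF k feas inv, where v="u r"] Kpos by simp
      qed
      also have "\<dots> = K ^ k * cost k n R u" unfolding cost_def by (simp add: sum_distrib_left)
      finally show "Re (\<Sum>i\<in>idx k n. \<rho> i * lam i) / K ^ k \<le> cost k n R u"
        using Kpos by (simp add: field_simps)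
    qed
    then show ?thesis unfolding obj_eq[OF k] using Kpos by (simp add: field_simps)
  qed
  obtain lam0 where lam0: "\<And>\<sigma>. Re (\<Sum>i\<in>idx k n. \<sigma> i * lam0 i) \<le> proj_norm k n \<sigma>"
    and lam0r: "proj_norm k n \<rho> \<le> Re (\<Sum>i\<in>idx k n. \<rho> i * lam0 i)"
    using hb_app[OF k, of n \<rho>] by blast
  have feas0: "lp_feasible k n N c lam0"
    unfolding lp_feasible_def
  proof
    fix s assume s: "s \<in> idx k N"
    then have sb: "\<And>j. j < k \<Longrightarrow> s j < N j" by (auto simp: idx_def PiE_iff)
    define y where "y = (\<lambda>j p. c j p (s j))"
    define \<sigma> where "\<sigma> = (\<lambda>i. \<Prod>j<k. Wv k n y j (i j))"
    have e: "(\<Sum>i\<in>idx k (\<lambda>j. 2 * n j). lam_tilde k n lam0 i * (\<Prod>j<k. c j (i j) (s j)))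
        = Re (\<Sum>i\<in>idx k n. \<sigma> i * lam0 i)"
      using expand[OF k, of n lam0 y] unfolding y_def \<sigma>_def by (simp add: mult.commute)
    have "proj_norm k n \<sigma> \<le> (\<Prod>j<k. l2c (n j) (Wv k n y j))" unfolding \<sigma>_def by (rule pn_elem)
    also have "\<dots> = (\<Prod>j<k. l2r (2 * n j) (y j))" by (simp add: l2c_Wv)
    also have "\<dots> \<le> 1" by (rule prod_le_1) (auto simp: l2r_nonneg y_def rows sb)
    finally have p1: "proj_norm k n \<sigma> \<le> 1" .
    have "proj_norm k n (\<lambda>i. (-1) * \<sigma> i) \<le> cmod (-1) * proj_norm k n \<sigma>" by (rule pn_scale[OF k])
    then have p2: "proj_norm k n (\<lambda>i. - \<sigma> i) \<le> 1" using p1 by simp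
    have "Re (\<Sum>i\<in>idx k n. \<sigma> i * lam0 i) \<le> 1" using lam0[of \<sigma>] p1 by simp
    moreover have "- Re (\<Sum>i\<in>idx k n. \<sigma> i * lam0 i) \<le> 1"
      using lam0[of "\<lambda>i. - \<sigma> i"] p2 by (simp add: sum_negf)
    ultimately show "\<bar>\<Sum>i\<in>idx k (\<lambda>j. 2 * n j). lam_tilde k n lam0 i * (\<Prod>j<k. c j (i j) (s j))\<bar> \<le> 1"
      unfolding e by simp
  qed
  have bdd: "bdd_above (lp_objective k n \<rho> ` {lam. lp_feasible k n N c lam})"
    by (rule bdd_aboveI2[where M="K ^ k * proj_norm k n \<rho>"]) (simp add: UB)
  have ne: "{lam. lp_feasible k n N c lam} \<noteq> {}" using feas0 by blast
  have "proj_norm k n \<rho> \<le> lp_objective k n \<rho> lam0" using lam0r obj_eq[OF k] by simp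
  also have "\<dots> \<le> lp_value k n N c \<rho>" unfolding lp_value_def
    by (rule cSup_upper[OF _ bdd]) (use feas0 in simp)
  finally have lo: "proj_norm k n \<rho> \<le> lp_value k n N c \<rho>" .
  have up: "lp_value k n N c \<rho> \<le> K ^ k * proj_norm k n \<rho>" unfolding lp_value_def
    by (rule cSup_least) (use ne UB in auto)
  show ?thesis using bdd lo up unfolding K_def by simp
qed

end
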